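(* Let $a,b$ be integers such that $q=a^3+5a^2b-8ab^2+b^3$ is a (positive) prime. Then $q\equiv\pm1\pmod 7$; moreover $q\equiv 1\pmod 7$ if and only if $\left(\frac{-7(a^2-ab+b^2)}{q}\right)=1$, and $q\equiv -1\pmod 7$ if and only if $\left(\frac{-7(a^2-ab+b^2)}{q}\right)=-1$.
   Context: $\left(\frac{\cdot}{q}\right)$ denotes the Legendre symbol modulo $q$. *)

theory Defs
  imports "HOL-Number_Theory.Number_Theory"
begin

end

theory Submission
  imports Defs
begin

lemma sq_leg:
  fixes p :: nat and x :: int
  assumes "prime p" "2 < p" "\<not> int p dvd x"
  shows "[(x^2)^((p-1) div 2) = 1] (mod int p)"
proof -
  have np: "\<not> int p dvd x^2" using assms
    by (metis prime_dvd_mult_iff prime_nat_int_transfer power2_eq_square)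
  have "Legendre (x^2) p = 1"
    unfolding Legendre_def QuadRes_def using np by (auto simp: cong_0_iff intro: exI[of _ x])
  then show ?thesis using euler_criterion[OF assms(1,2), of "x^2"] by (simp add: cong_sym)
qed

lemma leg_vals: "Legendre a p \<in> {-1,0,1}" unfolding Legendre_def by auto

definition F :: "int \<Rightarrow> int \<Rightarrow> int" where "F a b = a^3 + 5*a^2*b - 8*a*b^2 + b^3"

lemma F_mod7: "[F a b = F (a mod 7) (b mod 7)] (mod 7)"
  unfolding F_def by (intro cong_add cong_diff cong_mult cong_pow) (auto simp: cong_def)

lemma F_fin: "r \<in> {0..6} \<Longrightarrow> s \<in> {0..6} \<Longrightarrow> F r s mod 7 = 1 \<or> F r s mod 7 = 6 \<or> (5*r - s) mod 7 = 0"
proof -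
  assume "r \<in> {0..6}" "s \<in> {0..6}"
  then have "r \<in> {0,1,2,3,4,5,6}" "s \<in> {0,1,2,3,4,5,6}" by auto
  then show ?thesis by (auto simp: F_def)
qed

lemma small_dvd:
  fixes q x :: int
  assumes "q > 2" "q dvd x" "x \<noteq> 0" "\<bar>x\<bar> \<le> 2"
  shows False
proof -
  have "q dvd \<bar>x\<bar>" using assms(2) by simp
  then have "q \<le> \<bar>x\<bar>" using assms(3) by (intro zdvd_imp_le) auto
  then show False using assms by simp
qed

theorem lemma6p4:
  fixes a b q :: int
  assumes "q = a^3 + 5*a^2*b - 8*a*b^2 + b^3"
    and "prime q"
  shows "([q = 1] (mod 7) \<or> [q = -1] (mod 7))
    \<and> ([q = 1] (mod 7) \<longleftrightarrow> Legendre (-7 * (a^2 - a*b + b^2)) q = 1)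
    \<and> ([q = -1] (mod 7) \<longleftrightarrow> Legendre (-7 * (a^2 - a*b + b^2)) q = -1)"
proof -
  have qF: "q = F a b" using assms(1) by (simp add: F_def)
  have q1: "q > 1" using assms(2) by (simp add: prime_int_iff)
  have pdiv: "\<And>m. m \<ge> 0 \<Longrightarrow> m dvd q \<Longrightarrow> m = 1 \<or> m = q" using assms(2) by (simp add: prime_int_iff)
  have qmod: "q mod 7 = 1 \<or> q mod 7 = 6"
  proof -
    have c: "F a b mod 7 = F (a mod 7) (b mod 7) mod 7" using F_mod7 by (simp add: cong_def)
    have "F (a mod 7) (b mod 7) mod 7 = 1 \<or> F (a mod 7) (b mod 7) mod 7 = 6
        \<or> (5*(a mod 7) - b mod 7) mod 7 = 0" by (intro F_fin) auto
    moreover have False if h: "(5*(a mod 7) - b mod 7) mod 7 = 0"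
    proof -
      have "[5*a - b = 5*(a mod 7) - b mod 7] (mod 7)" by (intro cong_diff cong_mult) (auto simp: cong_def)
      then have "(5*a - b) mod 7 = (5*(a mod 7) - b mod 7) mod 7" by (simp add: cong_def)
      then have "7 dvd (b - 5*a)" using h by (simp add: mod_eq_0_iff_dvd dvd_diff_commute)
      then obtain t where "b - 5*a = 7*t" by (auto simp: dvd_def)
      then have t: "b = 5*a + 7*t" by simp
      have "q = 49 * (7*a*t^2 + 7*t^3 - a^3)" unfolding qF F_def t by (simp add: algebra_simps power2_eq_square power3_eq_cube)
      then have "q = 7 * (7 * (7*a*t^2 + 7*t^3 - a^3))" "q = 49 * (7*a*t^2 + 7*t^3 - a^3)" by simp_all
      then have "7 dvd q" "49 dvd q" by (metis dvd_triv_left)+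
      then show False using pdiv[of 7] pdiv[of 49] by auto
    qed
    ultimately show ?thesis using c qF by auto
  qed
  have "q \<noteq> 2" using qmod by auto
  then have q2: "q > 2" using q1 by simp
  have q7: "\<not> q dvd 7"
  proof
    assume "q dvd 7"
    then have "q \<le> 7" by (intro zdvd_imp_le) auto
    then have "q \<in> {3,4,5,6,7}" using q2 by auto
    then show False using qmod \<open>q dvd 7\<close> by auto
  qed
  have qb: "\<not> q dvd b"
  proof
    assume "q dvd b"
    then obtain d where d: "b = q*d" by (auto simp: dvd_def)
    have "a^3 = q - b*(5*a^2 - 8*a*b + b^2)" unfolding assms(1) by (simp add: algebra_simps power2_eq_square power3_eq_cube)
    then have "q dvd a^3" using d by simp
    then have "q dvd a" using assms(2) prime_dvd_power by blast
    then obtain c where c: "a = q*c" by (auto simp: dvd_def)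
    have "F a b = q^3 * F c d" unfolding F_def c d by (simp add: algebra_simps power2_eq_square power3_eq_cube)
    then have "q * (q * F c d) = 1" using q1 qF by (simp add: power3_eq_cube mult.assoc)
    then have "q dvd 1" by (metis dvd_triv_left)
    then show False using q1 by simp
  qed
  define N where "N = a^2 - a*b + b^2"
  have qN: "\<not> q dvd N"
  proof
    assume h: "q dvd N"
    have "q = (a + 6*b)*N - b^2*(3*a+5*b)" unfolding assms(1) N_def by (simp add: algebra_simps power2_eq_square power3_eq_cube)
    then have "b^2*(3*a+5*b) = (a + 6*b)*N - q" by simp
    then have "q dvd b^2*(3*a+5*b)" using h by simp
    then have "q dvd 3*a+5*b" using qb assms(2)
      by (metis prime_dvd_mult_iff prime_dvd_power)
    moreover have "49*b^2 = 9*N - (3*a+5*b)*(3*a-8*b)" unfolding N_def by (simp add: algebra_simps power2_eq_square power3_eq_cube)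
    ultimately have "q dvd 7*(7*b^2)" using h by simp
    then show False using qb q7 assms(2)
      by (metis prime_dvd_mult_iff prime_dvd_power)
  qed
  define H where "H = 3*a^2 + 10*a*b - 8*b^2"
  have HA: "H^2 = 49*b^2*N + (9*a+15*b)*q" unfolding H_def N_def assms(1) by (simp add: algebra_simps power2_eq_square power3_eq_cube)
  have cA: "[H^2 = 49*b^2*N] (mod q)" unfolding HA cong_def by simp
  have qH: "\<not> q dvd H"
  proof
    assume "q dvd H"
    then have "q dvd H^2" by (simp add: power2_eq_square)
    then have "q dvd 7*(7*(b^2*N))" using HA by (simp add: dvd_add_left_iff mult.assoc)
    then show False using qb qN q7 assms(2)
      by (metis prime_dvd_mult_iff prime_dvd_power)
  qed
  define p where "p = nat q"
  have qp: "q = int p" using q1 unfolding p_def by simp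
  have pp: "prime p" using assms(2) qp by simp
  have p2: "2 < p" using q2 qp by simp
  define k where "k = (p - 1) div 2"
  have B: "[(H^2)^k = 1] (mod q)" using sq_leg[OF pp p2, of H] qH qp k_def by simp
  have qb7: "\<not> q dvd 7*b" using qb q7 assms(2) by (metis prime_dvd_mult_iff)
  have C: "[((7*b)^2)^k = 1] (mod q)" using sq_leg[OF pp p2, of "7*b"] qb7 qp k_def by simp
  have "[(49*b^2*N)^k = 1] (mod q)" using cong_trans[OF cong_pow[OF cong_sym[OF cA]] B] .
  moreover have "(49*b^2*N)^k = ((7*b)^2)^k * N^k" by (simp add: power_mult_distrib)
  ultimately have "[((7*b)^2)^k * N^k = 1] (mod q)" by simp
  moreover have "[1 * N^k = ((7*b)^2)^k * N^k] (mod q)"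
    using cong_mult[OF cong_sym[OF C] cong_refl] .
  ultimately have D: "[N^k = 1] (mod q)" using cong_trans by fastforce
  define L where "L = Legendre (-7 * N) q"
  define L7 where "L7 = Legendre 7 q"
  define Lq where "Lq = Legendre q 7"
  have E1: "[L = (-7*N)^k] (mod q)" unfolding L_def using euler_criterion[OF pp p2, of "-7*N"] qp k_def by simp
  have E2: "[L7 = 7^k] (mod q)" unfolding L7_def using euler_criterion[OF pp p2, of "7"] qp k_def by simp
  have "(-7*N)^k = (-1)^k * 7^k * N^k" by (simp add: power_mult_distrib[symmetric])
  moreover have "[(-1)^k * 7^k * N^k = (-1)^k * L7 * 1] (mod q)"
    by (intro cong_mult cong_refl D cong_sym[OF E2])
  ultimately have E3: "[L = (-1)^k * L7] (mod q)" using E1 cong_trans by fastforce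
  have QR: "L7 * Lq = (-1::int) ^ (nat ((7 - 1) div 2 * ((q - 1) div 2)))"
    unfolding L7_def Lq_def using Quadratic_Reciprocity_int[of 7 q] assms(2) q2 qmod q7 by fastforce
  have nk: "nat ((7 - 1) div 2 * ((q - 1) div 2)) = 3 * k" unfolding k_def qp by (simp add: nat_mult_distrib)
  have L7v: "L7 = 1 \<or> L7 = -1" unfolding L7_def Legendre_def using q7 by (auto simp: cong_0_iff)
  have m1: "((-1::int)^k)^2 = 1" by (simp add: power_mult[symmetric] mult.commute[of k] power_mult)
  have Lq_eq: "Lq = (-1)^k * L7"
  proof -
    have "Lq = L7 * (L7 * Lq)" using L7v by auto
    also have "\<dots> = L7 * ((-1)^k)^3" unfolding QR nk by (metis power_mult mult.commute)
    also have "((-1::int)^k)^3 = (-1)^k" using m1 by (simp add: power3_eq_cube power2_eq_square)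
    finally show ?thesis by simp
  qed
  have E4: "[Lq = q^3] (mod 7)" unfolding Lq_def using euler_criterion[of 7 q] by simp
  have Lqv: "Lq \<in> {-1,0,1}" unfolding Lq_def by (rule leg_vals)
  have "[q^3 = (q mod 7)^3] (mod 7)" by (intro cong_pow) (simp add: cong_def)
  then have Lqc: "[Lq = (q mod 7)^3] (mod 7)" using E4 cong_trans by blast
  have Lq1: "q mod 7 = 1 \<Longrightarrow> Lq = 1" using Lqc Lqv by (auto simp: cong_def)
  have Lq6: "q mod 7 = 6 \<Longrightarrow> Lq = -1" using Lqc Lqv by (auto simp: cong_def)
  have "[L = Lq] (mod q)" using E3 Lq_eq by simp
  then have "q dvd L - Lq" by (simp add: cong_iff_dvd_diff)
  moreover have "L \<in> {-1,0,1}" unfolding L_def by (rule leg_vals)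
  moreover have "Lq = 1 \<or> Lq = -1" using qmod Lq1 Lq6 by auto
  ultimately have LL: "L = Lq" using small_dvd[OF q2, of "L - Lq"] by fastforce
  have c1: "[q = 1] (mod 7) \<longleftrightarrow> q mod 7 = 1" by (simp add: cong_def)
  have c2: "[q = -1] (mod 7) \<longleftrightarrow> q mod 7 = 6" by (simp add: cong_def)
  show ?thesis unfolding c1 c2 N_def[symmetric] L_def[symmetric] LL using qmod Lq1 Lq6 by auto
qed

end
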